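(* Suppose the solution sets of (P) and (D) are nonempty and $A$ has full row rank, and suppose $\{\tau_k\}$ is positive, nonincreasing and $\tau_k\downarrow\tau_\infty>0$. Let $\{(y^k,x^k)\}$ be generated by Algorithm Snipal (described below) where each $y^{k+1}$ satisfies the stopping criterion (A'): $\|\nabla\psi_k(y^{k+1})\|\le\frac{\min(\sqrt{\tau_k},1)}{\sigma_k}\epsilon_k$ with $\epsilon_k\ge0$, $\sum_k\epsilon_k<\infty$. Then $\{(y^k,x^k)\}$ is bounded, $\{x^k\}$ converges to an optimal solution of (P) and $\{y^k\}$ converges to an optimal solution of (D).
   Context: Data: $A\in\mathbb{R}^{m\times n}$, $b\in\mathbb{R}^m$, $c\in\mathbb{R}^n$, $K=\{x\in\mathbb{R}^n\mid l\le x\le u\}$ with $l_i\in[-\infty,\infty)$, $u_i\in(-\infty,\infty]$; $\delta_K$ its indicator, $\delta_K^*$ its Fenchel conjugate, $\Pi_K$ the projection onto $K$. (P): $\min\{c^Tx+\delta_K(x)\mid Ax=b\}$; (D): $\max\{-\delta_K^*(A^Ty-c)+b^Ty\mid y\in\mathbb{R}^m\}$. Augmented Lagrangian $L_\sigma(y;x)=-b^Ty-\langle\Pi_K(x-\sigma(c-A^Ty)),c-A^Ty\rangle-\frac{1}{2\sigma}\|\Pi_K(x-\sigma(c-A^Ty))-x\|^2$. Algorithm Snipal: given $(x^0,y^0)$, $\sigma_0>0$, a nondecreasing sequence $\sigma_k\uparrow\sigma_\infty\le\infty$ and a positive nonincreasing sequence $\{\tau_k\}$; for $k=0,1,\dots$: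 compute $y^{k+1}$ as an approximate minimizer of $\psi_k(y):=L_{\sigma_k}(y;x^k)+\frac{\tau_k}{2\sigma_k}\|y-y^k\|^2$, then set $x^{k+1}=\Pi_K(x^k-\sigma_k(c-A^Ty^{k+1}))$. Here $\nabla\psi_k(y)=-b+A\Pi_K(x^k+\sigma_k(A^Ty-c))+\tau_k\sigma_k^{-1}(y-y^k)$. *)

theory Defs
  imports "HOL-Analysis.Analysis" "HOL-Library.Extended_Real"
begin

definition box_set :: "('n::finite \<Rightarrow> ereal) \<Rightarrow> ('n \<Rightarrow> ereal) \<Rightarrow> (real^'n) set" where
  "box_set l u = {x. \<forall>i. l i \<le> ereal (x $ i) \<and> ereal (x $ i) \<le> u i}"

definition proj_K :: "(real^'n::finite) set \<Rightarrow> real^'n \<Rightarrow> real^'n" where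
  "proj_K K x = closest_point K x"

definition support_fun :: "(real^'n::finite) set \<Rightarrow> real^'n \<Rightarrow> ereal" where
  "support_fun K z = (SUP x\<in>K. ereal (z \<bullet> x))"

definition primal_opt :: "real^'n^'m \<Rightarrow> real^'m \<Rightarrow> real^'n \<Rightarrow> (real^'n::finite) set \<Rightarrow> real^'n \<Rightarrow> bool" where
  "primal_opt A b c K x \<longleftrightarrow> x \<in> K \<and> A *v x = b \<and>
     (\<forall>x'. x' \<in> K \<and> A *v x' = b \<longrightarrow> c \<bullet> x \<le> c \<bullet> x')"

definition dual_obj :: "real^'n^'m \<Rightarrow> real^'m \<Rightarrow> real^'n \<Rightarrow> (real^'n::finite) set \<Rightarrow> real^'m::finite \<Rightarrow> ereal" where
  "dual_obj A b c K y = ereal (b \<bullet> y) - support_fun K (transpose A *v y - c)"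

definition dual_opt :: "real^'n^'m \<Rightarrow> real^'m \<Rightarrow> real^'n \<Rightarrow> (real^'n::finite) set \<Rightarrow> real^'m::finite \<Rightarrow> bool" where
  "dual_opt A b c K y \<longleftrightarrow> dual_obj A b c K y \<noteq> -\<infinity> \<and> dual_obj A b c K y \<noteq> \<infinity> \<and>
     (\<forall>y'. dual_obj A b c K y' \<le> dual_obj A b c K y)"

text \<open>Gradient of psi_k(y) = L_sigma(y;x) + tau/(2 sigma) ||y - y_old||^2, as given in the paper:
  -b + A Pi_K(x + sigma (A^T y - c)) + (tau/sigma)(y - y_old).\<close>
definition grad_psi :: "real^'n^'m \<Rightarrow> real^'m \<Rightarrow> real^'n \<Rightarrow> (real^'n::finite) set \<Rightarrow>
    real \<Rightarrow> real \<Rightarrow> real^'n \<Rightarrow> real^'m::finite \<Rightarrow> real^'m \<Rightarrow> real^'m" where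
  "grad_psi A b c K \<sigma> \<tau> x yold y =
     - b + A *v proj_K K (x + \<sigma> *\<^sub>R (transpose A *v y - c)) + (\<tau> / \<sigma>) *\<^sub>R (y - yold)"

end

theory Submission
  imports Defs
begin


definition kkt :: "real^'n^'m \<Rightarrow> real^'m \<Rightarrow> real^'n \<Rightarrow> (real^'n::finite) set \<Rightarrow> real^'n \<Rightarrow> real^'m::finite \<Rightarrow> bool" where
  "kkt A b c K x y \<longleftrightarrow> x \<in> K \<and> A *v x = b \<and> (\<forall>z\<in>K. (transpose A *v y - c) \<bullet> (z - x) \<le> 0)"

lemma coord_feas:
  fixes x d :: real and lo hi :: ereal
  assumes "lo \<le> ereal x" "ereal x \<le> hi" "d > 0 \<longrightarrow> ereal x \<noteq> hi" "d < 0 \<longrightarrow> ereal x \<noteq> lo"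
  shows "\<exists>\<delta>>0. \<forall>t. 0 < t \<and> t < \<delta> \<longrightarrow> lo \<le> ereal (x + t*d) \<and> ereal (x + t*d) \<le> hi"
proof (cases "d = 0")
  case True then show ?thesis using assms by (intro exI[of _ 1]) auto
next
  case False
  show ?thesis
  proof (cases "d > 0")
    case True
    then have ne: "ereal x \<noteq> hi" using assms by auto
    show ?thesis
    proof (cases hi)
      case (real h)
      with ne assms have "x < h" by auto
      show ?thesis
      proof (intro exI[of _ "(h - x)/d"] conjI allI impI)
        show "(h - x)/d > 0" using \<open>x < h\<close> True by simp
        fix t assume t: "0 < t \<and> t < (h - x)/d"
        have "t*d > 0" using t True by simp
        then show "lo \<le> ereal (x + t*d)" using assms(1) by (metis add.commute add_less_same_cancel2 ereal_less_eq(3) less_eq_real_def linorder_not_less order_trans)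
        have "t*d < h - x" using t True by (simp add: pos_less_divide_eq)
        then show "ereal (x + t*d) \<le> hi" using real by simp
      qed
    next
      case PInf
      show ?thesis
      proof (intro exI[of _ 1] conjI allI impI)
        fix t :: real assume t: "0 < t \<and> t < 1"
        have "t*d > 0" using t True by simp
        then show "lo \<le> ereal (x + t*d)" using assms(1) by (metis add.commute add_less_same_cancel2 ereal_less_eq(3) less_eq_real_def linorder_not_less order_trans)
        show "ereal (x + t*d) \<le> hi" using PInf by simp
      qed simp
    next
      case MInf with assms show ?thesis by simp
    qed
  next
    case False2: False
    then have dn: "d < 0" using False by simp
    then have ne: "ereal x \<noteq> lo" using assms by auto
    show ?thesis
    proof (cases lo)
      case (real h)
      with ne assms have "h < x" by auto
      show ?thesis
      proof (intro exI[of _ "(x - h)/(-d)"] conjI allI impI)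
        show "(x - h)/(-d) > 0" using \<open>h < x\<close> dn by (intro divide_pos_pos) auto
        fix t assume t: "0 < t \<and> t < (x - h)/(-d)"
        have "t*d < 0" using t dn by (simp add: mult_pos_neg)
        then show "ereal (x + t*d) \<le> hi" using assms(2) by (metis add.commute add_less_same_cancel2 ereal_less_eq(3) less_eq_real_def linorder_not_less order_trans add_less_same_cancel1)
        have "t*(-d) < x - h" using t dn by (metis neg_0_less_iff_less pos_less_divide_eq)
        then show "lo \<le> ereal (x + t*d)" using real by simp
      qed
    next
      case MInf
      show ?thesis
      proof (intro exI[of _ 1] conjI allI impI)
        fix t :: real assume t: "0 < t \<and> t < 1"
        have "t*d < 0" using t dn by (simp add: mult_pos_neg)
        then show "ereal (x + t*d) \<le> hi" using assms(2) by (metis add.commute add_less_same_cancel2 ereal_less_eq(3) less_eq_real_def linorder_not_less order_trans add_less_same_cancel1)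
        show "lo \<le> ereal (x + t*d)" using MInf by simp
      qed simp
    next
      case PInf with assms show ?thesis by simp
    qed
  qed
qed

lemma box_mem: "x \<in> box_set l u \<longleftrightarrow> (\<forall>i. l i \<le> ereal (x $ i) \<and> ereal (x $ i) \<le> u i)"
  by (simp add: box_set_def)

lemma inner_At_axis: "(transpose A *v axis j 1) \<bullet> (a::real^'n) = (A *v a) $ j"
  by (simp add: dot_lmul_matrix inner_axis')

lemma vm_neg: "(- x) v* (A::real^'n::finite^'m::finite) = - (x v* A)"
  by (simp add: vector_matrix_mult_def vec_eq_iff sum_negf)

lemma kkt_exists:
  fixes A :: "real^'n::finite^'m::finite" and b :: "real^'m" and c :: "real^'n"
  assumes opt: "primal_opt A b c (box_set l u) xs"
  shows "\<exists>y. kkt A b c (box_set l u) xs y"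
proof -
  let ?K = "box_set l u"
  define N where "N = {v::real^'n. \<forall>i. (v$i > 0 \<longrightarrow> ereal (xs$i) = u i) \<and> (v$i < 0 \<longrightarrow> ereal (xs$i) = l i)}"
  define S where "S = {transpose A *v y - v | y v. v \<in> N}"
  define G where "G = range (\<lambda>j. transpose A *v axis j (1::real)) \<union> range (\<lambda>j. - (transpose A *v axis j (1::real)))
     \<union> (\<lambda>i. - axis i (1::real)) ` {i. ereal (xs$i) = u i} \<union> (\<lambda>i. axis i (1::real)) ` {i. ereal (xs$i) = l i}"
  have xsK: "xs \<in> ?K" and Axs: "A *v xs = b" using opt by (auto simp: primal_opt_def)
  have N0: "0 \<in> N" by (simp add: N_def)
  have Nadd: "v + w \<in> N" if "v \<in> N" "w \<in> N" for v w
    using that unfolding N_def by (auto, smt (verit), smt (verit))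
  have Nscale: "t *\<^sub>R v \<in> N" if "v \<in> N" "t \<ge> 0" for v t
    using that unfolding N_def by (auto simp: zero_less_mult_iff mult_less_0_iff)
  have cS: "convex_cone S"
    unfolding convex_cone_iff
  proof (intro conjI ballI allI impI)
    show "0 \<in> S" unfolding S_def using N0 by (intro CollectI exI[of _ 0]) auto
  next
    fix p q assume "p \<in> S" "q \<in> S"
    then obtain y1 v1 y2 v2 where "p = transpose A *v y1 - v1" "v1 \<in> N" "q = transpose A *v y2 - v2" "v2 \<in> N"
      unfolding S_def by auto
    then show "p + q \<in> S" unfolding S_def using Nadd
      by (intro CollectI exI[of _ "y1 + y2"] exI[of _ "v1 + v2"]) (auto simp: matrix_vector_right_distrib vector_matrix_left_distrib algebra_simps)
  next
    fix p and t :: real assume "p \<in> S" "t \<ge> 0"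
    then obtain y1 v1 where "p = transpose A *v y1 - v1" "v1 \<in> N"
      unfolding S_def by auto
    then show "t *\<^sub>R p \<in> S" unfolding S_def using Nscale \<open>t \<ge> 0\<close>
      by (intro CollectI exI[of _ "t *\<^sub>R y1"] exI[of _ "t *\<^sub>R v1"]) (auto simp del: transpose_matrix_vector simp: matrix_vector_mult_scaleR scaleR_diff_right)
  qed
  have GS: "G \<subseteq> S"
  proof
    fix g assume "g \<in> G"
    then consider (a) j where "g = transpose A *v axis j 1" | (b) j where "g = - (transpose A *v axis j 1)"
      | (c) i where "g = - axis i 1" "ereal (xs$i) = u i" | (d) i where "g = axis i 1" "ereal (xs$i) = l i"
      unfolding G_def by blast
    then show "g \<in> S"
    proof cases
      case a then show ?thesis unfolding S_def using N0 by (intro CollectI exI[of _ "axis j 1"] exI[of _ 0]) auto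
    next
      case b then show ?thesis unfolding S_def using N0
        by (intro CollectI exI[of _ "- axis j 1"] exI[of _ 0]) (auto simp: vm_neg)
    next
      case c
      have "axis i 1 \<in> N" using c unfolding N_def by (auto simp: axis_def)
      then show ?thesis unfolding S_def using c by (intro CollectI exI[of _ 0] exI[of _ "axis i 1"]) auto
    next
      case d
      have "- axis i 1 \<in> N" using d unfolding N_def by (auto simp: axis_def)
      then show ?thesis unfolding S_def using d by (intro CollectI exI[of _ 0] exI[of _ "- axis i 1"]) auto
    qed
  qed
  have hullS: "convex_cone hull G \<subseteq> S" using GS cS by (simp add: hull_minimal)
  have cS_mem: "c \<in> S"
  proof (rule ccontr)
    assume "c \<notin> S"
    then have "c \<notin> convex_cone hull G" using hullS by auto
    moreover have "finite G" unfolding G_def by auto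
    ultimately obtain a \<beta> where a1: "a \<bullet> c < \<beta>" and a2: "\<forall>x\<in>convex_cone hull G. \<beta> < a \<bullet> x"
      using separating_hyperplane_closed_point[of "convex_cone hull G" c] closed_convex_cone_hull convex_convex_cone_hull
      by blast
    have "0 \<in> convex_cone hull G" by (simp add: convex_cone_contains_0 convex_cone_convex_cone_hull)
    then have \<beta>neg: "\<beta> < 0" using a2 by force
    have ag: "a \<bullet> g \<ge> 0" if "g \<in> G" for g
    proof (rule ccontr)
      assume neg: "\<not> a \<bullet> g \<ge> 0"
      define t where "t = \<beta> / (a \<bullet> g)"
      have t0: "t \<ge> 0" unfolding t_def using neg \<beta>neg by (simp add: divide_nonpos_neg)
      have "g \<in> convex_cone hull G" using that by (simp add: hull_inc)
      then have "t *\<^sub>R g \<in> convex_cone hull G"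
        using t0 by (simp add: convex_cone_convex_cone_hull convex_cone_scaleR)
      then have "\<beta> < t * (a \<bullet> g)" using a2 by force
      moreover have "t * (a \<bullet> g) = \<beta>" unfolding t_def using neg by simp
      ultimately show False by simp
    qed
    have Aa: "A *v a = 0"
    proof -
      have "(A *v a) $ j = 0" for j
      proof -
        have g1: "transpose A *v axis j 1 \<in> G" and g2: "- (transpose A *v axis j 1) \<in> G" unfolding G_def by auto
        have "a \<bullet> (transpose A *v axis j 1) \<ge> 0" "a \<bullet> (- (transpose A *v axis j 1)) \<ge> 0"
          using ag[OF g1] ag[OF g2] by auto
        then show ?thesis using inner_At_axis[of A j a] by (simp add: inner_commute)
      qed
      then show ?thesis by (simp add: vec_eq_iff)
    qed
    have aU: "a $ i \<le> 0" if "ereal (xs$i) = u i" for i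
    proof -
      have "- axis i 1 \<in> G" using that unfolding G_def by auto
      then show ?thesis using ag by (force simp: inner_axis)
    qed
    have aL: "a $ i \<ge> 0" if "ereal (xs$i) = l i" for i
    proof -
      have "axis i 1 \<in> G" using that unfolding G_def by auto
      then show ?thesis using ag by (force simp: inner_axis)
    qed
    have ev: "\<forall>\<^sub>F t in at_right (0::real). \<forall>i. l i \<le> ereal (xs$i + t * a$i) \<and> ereal (xs$i + t * a$i) \<le> u i"
    proof (rule eventually_all_finite)
      fix i
      have "l i \<le> ereal (xs$i)" "ereal (xs$i) \<le> u i" using xsK by (auto simp: box_mem)
      moreover have "a$i > 0 \<longrightarrow> ereal (xs$i) \<noteq> u i" "a$i < 0 \<longrightarrow> ereal (xs$i) \<noteq> l i"
        using aU aL by force+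
      ultimately obtain \<delta> where "\<delta> > 0" "\<forall>t. 0 < t \<and> t < \<delta> \<longrightarrow> l i \<le> ereal (xs$i + t * a$i) \<and> ereal (xs$i + t * a$i) \<le> u i"
        using coord_feas[of "l i" "xs$i" "u i" "a$i"] by blast
      then show "\<forall>\<^sub>F t in at_right 0. l i \<le> ereal (xs$i + t * a$i) \<and> ereal (xs$i + t * a$i) \<le> u i"
        unfolding eventually_at_right_field by auto
    qed
    then obtain bb where bb: "bb > 0" "\<forall>t>0. t < bb \<longrightarrow> (\<forall>i. l i \<le> ereal (xs$i + t * a$i) \<and> ereal (xs$i + t * a$i) \<le> u i)"
      unfolding eventually_at_right_field by auto
    define t where "t = bb / 2"
    have t: "t > 0" "t < bb" using bb unfolding t_def by auto
    have "xs + t *\<^sub>R a \<in> ?K" using bb(2) t by (auto simp: box_mem)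
    moreover have "A *v (xs + t *\<^sub>R a) = b" using Aa Axs by (simp add: matrix_vector_right_distrib vector_matrix_left_distrib matrix_vector_mult_scaleR)
    ultimately have "c \<bullet> xs \<le> c \<bullet> (xs + t *\<^sub>R a)" using opt by (auto simp: primal_opt_def)
    moreover have "c \<bullet> a < 0" using a1 \<beta>neg by (simp add: inner_commute)
    ultimately show False using t by (simp add: inner_add_right) (metis mult_pos_neg not_le)
  qed
  then obtain y v where cy: "c = transpose A *v y - v" and vN: "v \<in> N" unfolding S_def by auto
  have "(transpose A *v y - c) \<bullet> (z - xs) \<le> 0" if "z \<in> ?K" for z
  proof -
    have "transpose A *v y - c = v" using cy by simp
    moreover have "v $ i * (z - xs) $ i \<le> 0" for i
    proof -
      have zi: "l i \<le> ereal (z$i)" "ereal (z$i) \<le> u i" using that by (auto simp: box_mem)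
      consider "v$i > 0" | "v$i < 0" | "v$i = 0" by linarith
      then show ?thesis
      proof cases
        case 1 then have "ereal (xs$i) = u i" using vN by (auto simp: N_def)
        then have "z$i \<le> xs$i" using zi by (metis ereal_less_eq(3))
        then show ?thesis using 1 by (simp add: mult_nonneg_nonpos)
      next
        case 2 then have "ereal (xs$i) = l i" using vN by (auto simp: N_def)
        then have "z$i \<ge> xs$i" using zi by (metis ereal_less_eq(3))
        then show ?thesis using 2 by (simp add: mult_nonpos_nonneg)
      qed simp
    qed
    then have "v \<bullet> (z - xs) \<le> 0" unfolding inner_vec_def by (simp add: sum_nonpos)
    ultimately show ?thesis by simp
  qed
  then show ?thesis using xsK Axs unfolding kkt_def by blast
qed




lemma fejer_alg:
  fixes X X' :: "'a::real_inner" and Y Y' g :: "'b::real_inner"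
  assumes "(X - X') \<bullet> X' + \<tau> * ((Y - Y') \<bullet> Y') \<ge> - (\<sigma> * (Y' \<bullet> g))"
  shows "norm X' ^ 2 + \<tau> * norm Y' ^ 2 \<le> norm X ^ 2 + \<tau> * norm Y ^ 2 - (norm (X - X') ^ 2 + \<tau> * norm (Y - Y') ^ 2) + 2 * \<sigma> * (Y' \<bullet> g)"
proof -
  have e1: "norm X ^ 2 = norm (X - X') ^ 2 + norm X' ^ 2 + 2 * ((X - X') \<bullet> X')"
    by (simp add: power2_norm_eq_inner inner_diff_left inner_diff_right inner_commute)
  have e2: "norm Y ^ 2 = norm (Y - Y') ^ 2 + norm Y' ^ 2 + 2 * ((Y - Y') \<bullet> Y')"
    by (simp add: power2_norm_eq_inner inner_diff_left inner_diff_right inner_commute)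
  show ?thesis using assms unfolding e1 e2 by (simp add: algebra_simps)
qed

lemma quasi_fejer:
  fixes B e :: "nat \<Rightarrow> real"
  assumes "\<And>k. B k \<ge> 0" "\<And>k. B (Suc k) \<le> B k + e k" "\<And>k. e k \<ge> 0" "summable e"
  shows "convergent B"
proof -
  define C where "C k = B k - (\<Sum>j<k. e j)" for k
  have "decseq C" unfolding decseq_Suc_iff C_def by (simp add: diff_le_eq assms(2))
  moreover have "\<forall>k. - suminf e \<le> C k"
  proof
    fix k
    have "(\<Sum>j<k. e j) \<le> suminf e" using assms(3) by (intro sum_le_suminf[OF assms(4)]) auto
    then show "- suminf e \<le> C k" unfolding C_def using assms(1)[of k] by linarith
  qed
  ultimately obtain L where L: "C \<longlonglongrightarrow> L" using decseq_convergent by blast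
  have "(\<lambda>k. C k + (\<Sum>j<k. e j)) \<longlonglongrightarrow> L + suminf e"
    using L summable_LIMSEQ[OF assms(4)] by (intro tendsto_add)
  then show ?thesis unfolding C_def convergent_def by auto
qed

lemma kkt_primal:
  assumes "kkt A b c K x y"
  shows "primal_opt A b c K x"
  unfolding primal_opt_def
proof (intro conjI allI impI)
  show "x \<in> K" "A *v x = b" using assms by (auto simp: kkt_def)
  fix x' assume h: "x' \<in> K \<and> A *v x' = b"
  have "(transpose A *v y - c) \<bullet> (x' - x) \<le> 0" using assms h by (auto simp: kkt_def)
  moreover have "(transpose A *v y) \<bullet> (x' - x) = 0"
    using h assms by (simp add: kkt_def dot_lmul_matrix matrix_vector_mult_diff_distrib)
  ultimately show "c \<bullet> x \<le> c \<bullet> x'" by (simp add: inner_diff_left inner_diff_right)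
qed

lemma kkt_dual:
  assumes "kkt A b c K x y"
  shows "dual_opt A b c K y"
proof -
  have xK: "x \<in> K" and Ax: "A *v x = b" using assms by (auto simp: kkt_def)
  have vi: "\<And>z. z \<in> K \<Longrightarrow> (transpose A *v y - c) \<bullet> (z - x) \<le> 0" using assms by (auto simp: kkt_def)
  have sup: "support_fun K (transpose A *v y - c) = ereal ((transpose A *v y - c) \<bullet> x)"
    unfolding support_fun_def
  proof (rule antisym)
    show "(SUP z\<in>K. ereal ((transpose A *v y - c) \<bullet> z)) \<le> ereal ((transpose A *v y - c) \<bullet> x)"
      using vi by (intro SUP_least) (auto simp: inner_diff_right)
    show "ereal ((transpose A *v y - c) \<bullet> x) \<le> (SUP z\<in>K. ereal ((transpose A *v y - c) \<bullet> z))"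
      using xK by (intro SUP_upper)
  qed
  have key: "b \<bullet> y' - (transpose A *v y' - c) \<bullet> x = c \<bullet> x" for y'
  proof -
    have "x \<bullet> (y' v* A) = b \<bullet> y'" using Ax by (metis dot_lmul_matrix inner_commute)
    then show ?thesis by (simp add: inner_diff_left inner_diff_right inner_commute)
  qed
  have val: "dual_obj A b c K y = ereal (c \<bullet> x)"
    unfolding dual_obj_def sup using key[of y] by simp
  have "dual_obj A b c K y' \<le> ereal (c \<bullet> x)" for y'
  proof -
    have "ereal ((transpose A *v y' - c) \<bullet> x) \<le> support_fun K (transpose A *v y' - c)"
      unfolding support_fun_def using xK by (intro SUP_upper)
    then have "dual_obj A b c K y' \<le> ereal (b \<bullet> y') - ereal ((transpose A *v y' - c) \<bullet> x)"
      unfolding dual_obj_def by (intro ereal_minus_mono) auto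
    then show ?thesis using key[of y'] by simp
  qed
  then show ?thesis unfolding dual_opt_def val by auto
qed




locale snipal =
  fixes A :: "real^'n::finite^'m::finite" and b :: "real^'m" and c :: "real^'n" and K :: "(real^'n) set"
    and \<sigma> \<tau> \<epsilon> :: "nat \<Rightarrow> real" and tau_inf :: real
    and x :: "nat \<Rightarrow> real^'n" and y :: "nat \<Rightarrow> real^'m"
  assumes K_closed: "closed K" and K_convex: "convex K" and K_ne: "K \<noteq> {}"
    and sigma_pos: "\<sigma> 0 > 0" and sigma_mono: "incseq \<sigma>"
    and tau_pos: "\<And>k. \<tau> k > 0" and tau_mono: "decseq \<tau>"
    and tau_lim: "\<tau> \<longlonglongrightarrow> tau_inf" and tau_inf_pos: "tau_inf > 0"
    and eps_nonneg: "\<And>k. \<epsilon> k \<ge> 0" and eps_summable: "summable \<epsilon>"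
    and stop: "\<And>k. norm (grad_psi A b c K (\<sigma> k) (\<tau> k) (x k) (y k) (y (Suc k)))
                    \<le> min (sqrt (\<tau> k)) 1 / \<sigma> k * \<epsilon> k"
    and xupd: "\<And>k. x (Suc k) = proj_K K (x k - \<sigma> k *\<^sub>R (c - transpose A *v y (Suc k)))"
begin

definition g where "g k = grad_psi A b c K (\<sigma> k) (\<tau> k) (x k) (y k) (y (Suc k))"

lemma sigma_ge: "\<sigma> k \<ge> \<sigma> 0" using sigma_mono by (simp add: incseq_def)
lemma sigma_pos': "\<sigma> k > 0" using sigma_ge sigma_pos by (meson less_le_trans)
lemma tau_ge: "\<tau> k \<ge> tau_inf" using decseq_ge[OF tau_mono tau_lim] .
lemma tau_le: "\<tau> k \<le> \<tau> 0" using tau_mono by (simp add: decseq_def)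

lemma xK: "x (Suc k) \<in> K"
  unfolding xupd proj_K_def using K_closed K_ne by (rule closest_point_in_set)

lemma g_eq: "g k = - b + A *v x (Suc k) + (\<tau> k / \<sigma> k) *\<^sub>R (y (Suc k) - y k)"
proof -
  have "x k + \<sigma> k *\<^sub>R (transpose A *v y (Suc k) - c) = x k - \<sigma> k *\<^sub>R (c - transpose A *v y (Suc k))"
    by (simp add: algebra_simps)
  then show ?thesis unfolding g_def grad_psi_def xupd by simp
qed

lemma g_bound: "norm (g k) \<le> \<epsilon> k / \<sigma> k"
proof -
  have "min (sqrt (\<tau> k)) 1 / \<sigma> k * \<epsilon> k \<le> 1 / \<sigma> k * \<epsilon> k"
    using sigma_pos'[of k] eps_nonneg[of k] by (intro mult_right_mono divide_right_mono) auto
  then show ?thesis using stop[of k] unfolding g_def by simp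
qed

lemma vi1: "z \<in> K \<Longrightarrow> (x k - x (Suc k)) \<bullet> (z - x (Suc k)) + \<sigma> k * ((transpose A *v y (Suc k) - c) \<bullet> (z - x (Suc k))) \<le> 0"
proof -
  assume z: "z \<in> K"
  have le: "(x k - \<sigma> k *\<^sub>R (c - transpose A *v y (Suc k)) - x (Suc k)) \<bullet> (z - x (Suc k)) \<le> 0"
    using closest_point_dot[OF K_convex K_closed z] unfolding xupd proj_K_def by simp
  have eq: "x k - \<sigma> k *\<^sub>R (c - transpose A *v y (Suc k)) - x (Suc k) = (x k - x (Suc k)) + \<sigma> k *\<^sub>R (transpose A *v y (Suc k) - c)"
    by (simp add: algebra_simps)
  from le have "((x k - x (Suc k)) + \<sigma> k *\<^sub>R (transpose A *v y (Suc k) - c)) \<bullet> (z - x (Suc k)) \<le> 0"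
    by (simp only: eq)
  then show ?thesis by (simp only: inner_add_left inner_scaleR_left)
qed

lemma step:
  assumes kkt: "kkt A b c K xs ys"
  shows "norm (x (Suc k) - xs) ^ 2 + \<tau> k * norm (y (Suc k) - ys) ^ 2 \<le>
     norm (x k - xs) ^ 2 + \<tau> k * norm (y k - ys) ^ 2 - (norm (x k - x (Suc k)) ^ 2 + \<tau> k * norm (y k - y (Suc k)) ^ 2)
     + 2 * \<sigma> k * ((y (Suc k) - ys) \<bullet> g k)"
proof -
  let ?s = "\<sigma> k" and ?t = "\<tau> k"
  define X where "X = x k - xs"
  define X' where "X' = x (Suc k) - xs"
  define Y where "Y = y k - ys"
  define Y' where "Y' = y (Suc k) - ys"
  have xsK: "xs \<in> K" and Axs: "A *v xs = b" using kkt by (auto simp: kkt_def)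
  have h1: "(x k - x (Suc k)) \<bullet> X' + ?s * ((transpose A *v y (Suc k) - c) \<bullet> X') \<ge> 0"
    using vi1[OF xsK, of k] unfolding X'_def
    by (smt (verit, best) inner_minus_right minus_diff_eq mult_minus_right)
  have h2: "(transpose A *v ys - c) \<bullet> X' \<le> 0" using kkt xK[of k] unfolding kkt_def X'_def by blast
  have h3: "(transpose A *v y (Suc k) - c) \<bullet> X' - (transpose A *v ys - c) \<bullet> X' = Y' \<bullet> (A *v X')"
    unfolding Y'_def by (simp add: inner_diff_left dot_lmul_matrix[symmetric] vector_matrix_mult_diff_distrib)
  have h4: "A *v X' = g k + (?t / ?s) *\<^sub>R (Y - Y')"
    unfolding X'_def Y_def Y'_def g_eq by (simp add: matrix_vector_mult_diff_distrib Axs algebra_simps)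
  have h5: "Y' \<bullet> (A *v X') = Y' \<bullet> g k + (?t / ?s) * ((Y - Y') \<bullet> Y')"
    unfolding h4 by (simp add: inner_add_right inner_commute)
  have sp: "?s > 0" by (rule sigma_pos')
  have "?s * ((transpose A *v y (Suc k) - c) \<bullet> X') \<le> ?s * (Y' \<bullet> (A *v X'))"
    using h2 h3 sp by (smt (verit, best) mult_left_mono)
  moreover have "?s * (Y' \<bullet> (A *v X')) = ?s * (Y' \<bullet> g k) + ?t * ((Y - Y') \<bullet> Y')"
    unfolding h5 using sp by (simp add: algebra_simps)
  ultimately have "(X - X') \<bullet> X' + ?t * ((Y - Y') \<bullet> Y') \<ge> - (?s * (Y' \<bullet> g k))"
    using h1 unfolding X_def X'_def by (simp add: algebra_simps)
  from fejer_alg[OF this] show ?thesis unfolding X_def X'_def Y_def Y'_def by (simp add: algebra_simps)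
qed

lemma sq_aux:
  fixes p q r :: real
  assumes "p \<ge> 0" "q \<ge> 0" "r \<ge> 0" "p^2 \<le> q^2 + 2*r*p"
  shows "p \<le> q + 2*r"
proof (rule ccontr)
  assume "\<not> ?thesis"
  then have "p > q + 2*r" by simp
  then have "p * (p - 2*r) > q * q" using assms by (smt (verit) mult_strict_mono)
  then show False using assms(4) by (simp add: power2_eq_square algebra_simps)
qed

lemma fejer:
  assumes kkt: "kkt A b c K xs ys"
  shows "convergent (\<lambda>k. norm (x k - xs) ^ 2 + \<tau> k * norm (y k - ys) ^ 2)"
    and "(\<lambda>k. norm (x k - x (Suc k)) ^ 2 + \<tau> k * norm (y k - y (Suc k)) ^ 2) \<longlonglongrightarrow> 0"
proof -
  define \<Phi> where "\<Phi> k = norm (x k - xs) ^ 2 + \<tau> k * norm (y k - ys) ^ 2" for k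
  define \<Psi> where "\<Psi> k = norm (x (Suc k) - xs) ^ 2 + \<tau> k * norm (y (Suc k) - ys) ^ 2" for k
  define D where "D k = norm (x k - x (Suc k)) ^ 2 + \<tau> k * norm (y k - y (Suc k)) ^ 2" for k
  have tp: "\<tau> k > 0" for k by (rule tau_pos)
  have \<Phi>0: "\<Phi> k \<ge> 0" for k unfolding \<Phi>_def using tp[of k] by simp
  have \<Psi>0: "\<Psi> k \<ge> 0" for k unfolding \<Psi>_def using tp[of k] by simp
  have D0: "D k \<ge> 0" for k unfolding D_def using tp[of k] by simp
  have F1: "\<Psi> k \<le> \<Phi> k - D k + 2 * \<epsilon> k * sqrt (\<Psi> k)" for k
  proof -
    have sp: "\<sigma> k > 0" by (rule sigma_pos')
    have "\<sigma> k * norm (g k) \<le> min (sqrt (\<tau> k)) 1 * \<epsilon> k"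
      using stop[of k] sp unfolding g_def by (simp add: field_simps)
    also have "\<dots> \<le> sqrt (\<tau> k) * \<epsilon> k" using eps_nonneg[of k] by (intro mult_right_mono) auto
    finally have gb: "\<sigma> k * norm (g k) \<le> sqrt (\<tau> k) * \<epsilon> k" .
    have "\<sigma> k * ((y (Suc k) - ys) \<bullet> g k) \<le> \<sigma> k * (norm (y (Suc k) - ys) * norm (g k))"
      using sp by (intro mult_left_mono) (auto simp: norm_cauchy_schwarz)
    also have "\<dots> = norm (y (Suc k) - ys) * (\<sigma> k * norm (g k))" by simp
    also have "\<dots> \<le> norm (y (Suc k) - ys) * (sqrt (\<tau> k) * \<epsilon> k)" using gb by (intro mult_left_mono) auto
    also have "\<dots> = sqrt (\<tau> k * norm (y (Suc k) - ys) ^ 2) * \<epsilon> k"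
      using tp[of k] by (simp add: real_sqrt_mult)
    also have "\<dots> \<le> sqrt (\<Psi> k) * \<epsilon> k" unfolding \<Psi>_def using eps_nonneg[of k]
      by (intro mult_right_mono real_sqrt_le_mono) auto
    finally have "\<sigma> k * ((y (Suc k) - ys) \<bullet> g k) \<le> sqrt (\<Psi> k) * \<epsilon> k" .
    then show ?thesis using step[OF kkt, of k] unfolding \<Psi>_def \<Phi>_def D_def by (simp add: algebra_simps)
  qed
  have F2: "\<Phi> (Suc k) \<le> \<Psi> k" for k
    unfolding \<Phi>_def \<Psi>_def using tau_mono by (intro add_left_mono mult_right_mono) (auto simp: decseq_Suc_iff)
  define B where "B k = sqrt (\<Phi> k)" for k
  have sPsi: "sqrt (\<Psi> k) \<le> B k + 2 * \<epsilon> k" for k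
  proof (rule sq_aux)
    show "(sqrt (\<Psi> k))^2 \<le> (B k)^2 + 2 * \<epsilon> k * sqrt (\<Psi> k)"
      unfolding B_def using F1[of k] D0[of k] \<Phi>0[of k] \<Psi>0[of k] by simp
  qed (auto simp: B_def eps_nonneg \<Phi>0 \<Psi>0)
  have BS: "B (Suc k) \<le> B k + 2 * \<epsilon> k" for k
    using sPsi[of k] F2[of k] unfolding B_def by (meson order_trans real_sqrt_le_mono)
  have "convergent B"
    by (rule quasi_fejer[of B "\<lambda>k. 2 * \<epsilon> k", OF _ BS]) (auto simp: B_def eps_nonneg \<Phi>0 intro: summable_mult eps_summable)
  then obtain L where L: "B \<longlonglongrightarrow> L" by (auto simp: convergent_def)
  have PhiB: "\<Phi> k = (B k)^2" for k unfolding B_def using \<Phi>0[of k] by simp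
  have PL: "\<Phi> \<longlonglongrightarrow> L^2" unfolding PhiB using L by (intro tendsto_intros)
  then show "convergent (\<lambda>k. norm (x k - xs) ^ 2 + \<tau> k * norm (y k - ys) ^ 2)"
    unfolding \<Phi>_def[symmetric] convergent_def by auto
  have eps0: "\<epsilon> \<longlonglongrightarrow> 0" by (rule summable_LIMSEQ_zero[OF eps_summable])
  have up: "D k \<le> \<Phi> k - \<Phi> (Suc k) + 2 * \<epsilon> k * (B k + 2 * \<epsilon> k)" for k
  proof -
    have "2 * \<epsilon> k * sqrt (\<Psi> k) \<le> 2 * \<epsilon> k * (B k + 2 * \<epsilon> k)"
      using sPsi[of k] eps_nonneg[of k] by (intro mult_left_mono) auto
    then show ?thesis using F1[of k] F2[of k] by linarith
  qed
  have "(\<lambda>k. \<Phi> k - \<Phi> (Suc k) + 2 * \<epsilon> k * (B k + 2 * \<epsilon> k)) \<longlonglongrightarrow> L^2 - L^2 + 2 * 0 * (L + 2 * 0)"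
    using PL LIMSEQ_Suc[OF PL] eps0 L by (intro tendsto_intros)
  then have upl: "(\<lambda>k. \<Phi> k - \<Phi> (Suc k) + 2 * \<epsilon> k * (B k + 2 * \<epsilon> k)) \<longlonglongrightarrow> 0" by simp
  show "(\<lambda>k. norm (x k - x (Suc k)) ^ 2 + \<tau> k * norm (y k - y (Suc k)) ^ 2) \<longlonglongrightarrow> 0"
    unfolding D_def[symmetric]
  proof (rule tendsto_sandwich[where f="\<lambda>_. 0"])
    show "\<forall>\<^sub>F n in sequentially. 0 \<le> D n" using D0 by simp
    show "\<forall>\<^sub>F n in sequentially. D n \<le> \<Phi> n - \<Phi> (Suc n) + 2 * \<epsilon> n * (B n + 2 * \<epsilon> n)" using up by simp
  qed (rule upl | simp)+
qed

end



context snipal begin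

lemma norm_le_sqrt_null:
  fixes f :: "nat \<Rightarrow> 'a::real_normed_vector"
  assumes "\<And>k. norm (f k) ^ 2 \<le> h k" "h \<longlonglongrightarrow> 0"
  shows "f \<longlonglongrightarrow> 0"
proof (rule Lim_null_comparison)
  show "\<forall>\<^sub>F k in sequentially. norm (f k) \<le> sqrt (h k)" using assms(1) by (simp add: real_le_rsqrt)
  show "(\<lambda>k. sqrt (h k)) \<longlonglongrightarrow> 0" using tendsto_real_sqrt[OF assms(2)] by simp
qed

lemma tinf: "\<tau> k * v \<ge> tau_inf * v" if "v \<ge> 0" for v
  using tau_ge[of k] that by (simp add: mult_right_mono)

lemma dxdy:
  assumes kkt: "kkt A b c K xs ys"
  shows "(\<lambda>k. x k - x (Suc k)) \<longlonglongrightarrow> 0" and "(\<lambda>k. y k - y (Suc k)) \<longlonglongrightarrow> 0"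
proof -
  note D = fejer(2)[OF kkt]
  show "(\<lambda>k. x k - x (Suc k)) \<longlonglongrightarrow> 0"
    by (rule norm_le_sqrt_null[OF _ D]) (use tau_pos in \<open>simp add: less_imp_le\<close>)
  show "(\<lambda>k. y k - y (Suc k)) \<longlonglongrightarrow> 0"
  proof (rule norm_le_sqrt_null)
    fix k
    have "tau_inf * norm (y k - y (Suc k)) ^ 2 \<le> \<tau> k * norm (y k - y (Suc k)) ^ 2" by (rule tinf) simp
    also have "\<dots> \<le> norm (x k - x (Suc k)) ^ 2 + \<tau> k * norm (y k - y (Suc k)) ^ 2" by simp
    finally show "norm (y k - y (Suc k)) ^ 2 \<le> (norm (x k - x (Suc k)) ^ 2 + \<tau> k * norm (y k - y (Suc k)) ^ 2) / tau_inf"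
      using tau_inf_pos by (simp add: field_simps)
  next
    show "(\<lambda>k. (norm (x k - x (Suc k)) ^ 2 + \<tau> k * norm (y k - y (Suc k)) ^ 2) / tau_inf) \<longlonglongrightarrow> 0"
      using tendsto_divide[OF D tendsto_const[of tau_inf]] tau_inf_pos by simp
  qed
qed

lemma bounds:
  assumes kkt: "kkt A b c K xs ys"
  obtains M where "M > 0" "\<And>k. norm (x k - xs) ^ 2 + \<tau> k * norm (y k - ys) ^ 2 \<le> M"
proof -
  have "Bseq (\<lambda>k. norm (x k - xs) ^ 2 + \<tau> k * norm (y k - ys) ^ 2)"
    using fejer(1)[OF kkt] by (rule convergent_imp_Bseq)
  then obtain M where M: "M > 0" "\<forall>k. norm (norm (x k - xs) ^ 2 + \<tau> k * norm (y k - ys) ^ 2) \<le> M"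
    using BseqE by blast
  have "norm (x k - xs) ^ 2 + \<tau> k * norm (y k - ys) ^ 2 \<le> M" for k
    using M(2) abs_le_D1 real_norm_def by metis
  then show ?thesis using that M(1) by blast
qed

lemma limit_norm:
  assumes kkt: "kkt A b c K xs ys" and
    lim0: "(\<lambda>k. norm (x k - xs) ^ 2 + \<tau> k * norm (y k - ys) ^ 2) \<longlonglongrightarrow> 0"
  shows "x \<longlonglongrightarrow> xs" "y \<longlonglongrightarrow> ys"
proof -
  have "(\<lambda>k. x k - xs) \<longlonglongrightarrow> 0"
    by (rule norm_le_sqrt_null[OF _ lim0]) (use tau_pos in \<open>simp add: less_imp_le\<close>)
  then show "x \<longlonglongrightarrow> xs" using LIM_zero_cancel by blast
  have "(\<lambda>k. y k - ys) \<longlonglongrightarrow> 0"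
  proof (rule norm_le_sqrt_null)
    fix k
    have "tau_inf * norm (y k - ys) ^ 2 \<le> \<tau> k * norm (y k - ys) ^ 2" by (rule tinf) simp
    also have "\<dots> \<le> norm (x k - xs) ^ 2 + \<tau> k * norm (y k - ys) ^ 2" by simp
    finally show "norm (y k - ys) ^ 2 \<le> (norm (x k - xs) ^ 2 + \<tau> k * norm (y k - ys) ^ 2) / tau_inf"
      using tau_inf_pos by (simp add: field_simps)
  next
    show "(\<lambda>k. (norm (x k - xs) ^ 2 + \<tau> k * norm (y k - ys) ^ 2) / tau_inf) \<longlonglongrightarrow> 0"
      using tendsto_divide[OF lim0 tendsto_const[of tau_inf]] tau_inf_pos by simp
  qed
  then show "y \<longlonglongrightarrow> ys" using LIM_zero_cancel by blast
qed

lemma bounded_xy: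
  assumes kkt: "kkt A b c K xs ys"
  shows "bounded (range x)" "bounded (range y)"
proof -
  obtain M where M: "M > 0" "\<And>k. norm (x k - xs) ^ 2 + \<tau> k * norm (y k - ys) ^ 2 \<le> M"
    using bounds[OF kkt] by blast
  have "norm (x k) \<le> norm xs + sqrt M" for k
  proof -
    have "0 \<le> \<tau> k * norm (y k - ys) ^ 2" using tau_pos[of k] by simp
    then have "norm (x k - xs) ^ 2 \<le> M" using M(2)[of k] by linarith
    then have "norm (x k - xs) \<le> sqrt M" by (rule real_le_rsqrt)
    then show ?thesis using norm_triangle_ineq2[of "x k" xs] by linarith
  qed
  then show "bounded (range x)" unfolding bounded_iff by auto
  have "norm (y k) \<le> norm ys + sqrt (M / tau_inf)" for k
  proof -
    have "tau_inf * norm (y k - ys) ^ 2 \<le> \<tau> k * norm (y k - ys) ^ 2" by (rule tinf) simp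
    also have "\<dots> \<le> M" using M(2)[of k] zero_le_power2[of "norm (x k - xs)"] by linarith
    finally have "norm (y k - ys) ^ 2 \<le> M / tau_inf" using tau_inf_pos by (simp add: field_simps)
    then have "norm (y k - ys) \<le> sqrt (M / tau_inf)" by (rule real_le_rsqrt)
    then show ?thesis using norm_triangle_ineq2[of "y k" ys] by linarith
  qed
  then show "bounded (range y)" unfolding bounded_iff by auto
qed

end



context snipal begin

lemma blA: "bounded_linear (\<lambda>v. A *v v)" by simp
lemma blAT: "bounded_linear (\<lambda>v. transpose A *v v)" by (rule matrix_vector_mul_bounded_linear)

lemma main_conv:
  assumes kkt0: "kkt A b c K x0 y0"
  shows "\<exists>xb yb. kkt A b c K xb yb \<and> x \<longlonglongrightarrow> xb \<and> y \<longlonglongrightarrow> yb"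
proof -
  note dx = dxdy(1)[OF kkt0] and dy = dxdy(2)[OF kkt0]
  have bx: "bounded (range x)" and by': "bounded (range y)" using bounded_xy[OF kkt0] by auto
  obtain Mx where Mx: "\<And>k. norm (x k) \<le> Mx" using bx unfolding bounded_iff by auto
  have "bounded (range (\<lambda>k. (y k, x k)))"
    by (rule bounded_subset[OF bounded_Times[OF by' bx]]) auto
  then obtain l r where r: "strict_mono r" and lim: "((\<lambda>k. (y k, x k)) \<circ> r) \<longlonglongrightarrow> l"
    using bounded_imp_convergent_subsequence by blast
  define yb where "yb = fst l"
  define xb where "xb = snd l"
  have yr: "(\<lambda>k. y (r k)) \<longlonglongrightarrow> yb" unfolding yb_def using tendsto_fst[OF lim] by (simp add: o_def)
  have xr: "(\<lambda>k. x (r k)) \<longlonglongrightarrow> xb" unfolding xb_def using tendsto_snd[OF lim] by (simp add: o_def)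
  have xr1: "(\<lambda>k. x (Suc (r k))) \<longlonglongrightarrow> xb"
  proof -
    have "(\<lambda>k. x (r k) - (x (r k) - x (Suc (r k)))) \<longlonglongrightarrow> xb - 0"
      using xr LIMSEQ_subseq_LIMSEQ[OF dx r] by (intro tendsto_diff) (auto simp: o_def)
    then show ?thesis by simp
  qed
  have yr1: "(\<lambda>k. y (Suc (r k))) \<longlonglongrightarrow> yb"
  proof -
    have "(\<lambda>k. y (r k) - (y (r k) - y (Suc (r k)))) \<longlonglongrightarrow> yb - 0"
      using yr LIMSEQ_subseq_LIMSEQ[OF dy r] by (intro tendsto_diff) (auto simp: o_def)
    then show ?thesis by simp
  qed
  have eps0: "\<epsilon> \<longlonglongrightarrow> 0" by (rule summable_LIMSEQ_zero[OF eps_summable])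
  have xbK: "xb \<in> K" using closed_sequentially[OF K_closed _ xr1] xK by blast
  have g0: "g \<longlonglongrightarrow> 0"
  proof (rule Lim_null_comparison)
    show "\<forall>\<^sub>F k in sequentially. norm (g k) \<le> \<epsilon> k / \<sigma> 0"
    proof (rule always_eventually, rule allI)
      fix k
      have "\<epsilon> k / \<sigma> k \<le> \<epsilon> k / \<sigma> 0"
        using eps_nonneg[of k] sigma_pos sigma_ge[of k] by (intro divide_left_mono) auto
      then show "norm (g k) \<le> \<epsilon> k / \<sigma> 0" using g_bound[of k] by linarith
    qed
    show "(\<lambda>k. \<epsilon> k / \<sigma> 0) \<longlonglongrightarrow> 0" using tendsto_divide[OF eps0 tendsto_const[of "\<sigma> 0"]] sigma_pos by simp
  qed
  have q0: "(\<lambda>k. (\<tau> k / \<sigma> k) *\<^sub>R (y (Suc k) - y k)) \<longlonglongrightarrow> 0"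
  proof (rule Lim_null_comparison)
    show "\<forall>\<^sub>F k in sequentially. norm ((\<tau> k / \<sigma> k) *\<^sub>R (y (Suc k) - y k)) \<le> (\<tau> 0 / \<sigma> 0) * norm (y k - y (Suc k))"
    proof (rule always_eventually, rule allI)
      fix k
      have "\<tau> k / \<sigma> k \<le> \<tau> 0 / \<sigma> 0"
        using tau_pos[of k] tau_le[of k] sigma_pos sigma_ge[of k] by (intro frac_le) auto
      moreover have "\<tau> k / \<sigma> k \<ge> 0" using tau_pos[of k] sigma_pos'[of k] by simp
      moreover have "norm ((\<tau> k / \<sigma> k) *\<^sub>R (y (Suc k) - y k)) = (\<tau> k / \<sigma> k) * norm (y k - y (Suc k))"
        using calculation(2) by (simp only: norm_scaleR abs_of_nonneg norm_minus_commute)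
      ultimately show "norm ((\<tau> k / \<sigma> k) *\<^sub>R (y (Suc k) - y k)) \<le> (\<tau> 0 / \<sigma> 0) * norm (y k - y (Suc k))"
        by (metis mult_right_mono norm_ge_zero)
    qed
    have "(\<lambda>k. norm (y k - y (Suc k))) \<longlonglongrightarrow> 0" using tendsto_norm[OF dy] by simp
    then show "(\<lambda>k. (\<tau> 0 / \<sigma> 0) * norm (y k - y (Suc k))) \<longlonglongrightarrow> 0"
      using tendsto_mult[OF tendsto_const[of "\<tau> 0 / \<sigma> 0"]] by fastforce
  qed
  have Ax1: "(\<lambda>k. A *v x (Suc k)) \<longlonglongrightarrow> b"
  proof -
    have "A *v x (Suc k) = g k + b - (\<tau> k / \<sigma> k) *\<^sub>R (y (Suc k) - y k)" for k
      unfolding g_eq by simp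
    moreover have "(\<lambda>k. g k + b - (\<tau> k / \<sigma> k) *\<^sub>R (y (Suc k) - y k)) \<longlonglongrightarrow> 0 + b - 0"
      using g0 q0 by (intro tendsto_intros)
    ultimately show ?thesis by simp
  qed
  have Axb: "A *v xb = b"
  proof -
    have "(\<lambda>k. A *v x (Suc (r k))) \<longlonglongrightarrow> A *v xb" using bounded_linear.tendsto[OF blA xr1] .
    moreover have "(\<lambda>k. A *v x (Suc (r k))) \<longlonglongrightarrow> b"
      using LIMSEQ_subseq_LIMSEQ[OF Ax1 r] by (simp add: o_def)
    ultimately show ?thesis using LIMSEQ_unique by blast
  qed
  have vib: "(transpose A *v yb - c) \<bullet> (z - xb) \<le> 0" if z: "z \<in> K" for z
  proof -
    define h where "h k = (transpose A *v y (Suc k) - c) \<bullet> (z - x (Suc k))" for k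
    define R where "R k = norm (x k - x (Suc k)) * ((norm z + Mx) / \<sigma> 0)" for k
    have hR: "h k \<le> R k" for k
    proof -
      have sp: "\<sigma> k > 0" by (rule sigma_pos')
      have "\<sigma> k * h k \<le> - ((x k - x (Suc k)) \<bullet> (z - x (Suc k)))" using vi1[OF z, of k] unfolding h_def by linarith
      also have "\<dots> \<le> norm (x k - x (Suc k)) * norm (z - x (Suc k))"
        by (metis abs_le_D1 abs_minus_commute minus_real_def Cauchy_Schwarz_ineq2 diff_0 add.commute abs_minus)
      also have "\<dots> \<le> norm (x k - x (Suc k)) * (norm z + Mx)"
        using Mx[of "Suc k"] norm_triangle_ineq4[of z "x (Suc k)"] by (intro mult_left_mono) auto
      finally have "\<sigma> k * h k \<le> norm (x k - x (Suc k)) * (norm z + Mx)" .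
      then have "h k \<le> norm (x k - x (Suc k)) * (norm z + Mx) / \<sigma> k" using sp by (simp add: field_simps)
      also have "\<dots> \<le> norm (x k - x (Suc k)) * (norm z + Mx) / \<sigma> 0"
      proof (rule divide_left_mono)
        show "0 \<le> norm (x k - x (Suc k)) * (norm z + Mx)"
        proof -
          have "0 \<le> norm z + Mx" using Mx[of 0] norm_ge_zero[of "x 0"] norm_ge_zero[of z] by linarith
          then show ?thesis by simp
        qed
      qed (use sigma_ge[of k] sigma_pos in auto)
      finally show ?thesis unfolding R_def by simp
    qed
    have R0: "R \<longlonglongrightarrow> 0"
    proof -
      have "(\<lambda>k. norm (x k - x (Suc k))) \<longlonglongrightarrow> 0" using tendsto_norm[OF dx] by simp
      then show ?thesis unfolding R_def using tendsto_mult[OF _ tendsto_const[of "(norm z + Mx) / \<sigma> 0"]] by fastforce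
    qed
    have hr: "(\<lambda>k. h (r k)) \<longlonglongrightarrow> (transpose A *v yb - c) \<bullet> (z - xb)"
      unfolding h_def
      using bounded_linear.tendsto[OF blAT yr1] xr1 by (intro tendsto_intros) auto
    have Rr: "(\<lambda>k. R (r k)) \<longlonglongrightarrow> 0" using LIMSEQ_subseq_LIMSEQ[OF R0 r] by (simp add: o_def)
    show ?thesis using LIMSEQ_le[OF hr Rr] hR by blast
  qed
  have kkb: "kkt A b c K xb yb" unfolding kkt_def using xbK Axb vib by blast
  obtain L where L: "(\<lambda>k. norm (x k - xb) ^ 2 + \<tau> k * norm (y k - yb) ^ 2) \<longlonglongrightarrow> L"
    using fejer(1)[OF kkb] by (auto simp: convergent_def)
  have taur: "(\<lambda>k. \<tau> (r k)) \<longlonglongrightarrow> tau_inf" using LIMSEQ_subseq_LIMSEQ[OF tau_lim r] by (simp add: o_def)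
  have "(\<lambda>k. norm (x (r k) - xb) ^ 2 + \<tau> (r k) * norm (y (r k) - yb) ^ 2) \<longlonglongrightarrow> norm (xb - xb) ^ 2 + tau_inf * norm (yb - yb) ^ 2"
    using xr yr taur by (intro tendsto_intros)
  then have L0': "(\<lambda>k. norm (x (r k) - xb) ^ 2 + \<tau> (r k) * norm (y (r k) - yb) ^ 2) \<longlonglongrightarrow> 0" by simp
  have "(\<lambda>k. norm (x (r k) - xb) ^ 2 + \<tau> (r k) * norm (y (r k) - yb) ^ 2) \<longlonglongrightarrow> L"
    using LIMSEQ_subseq_LIMSEQ[OF L r] by (simp add: o_def)
  then have "L = 0" using L0' LIMSEQ_unique by blast
  then have "(\<lambda>k. norm (x k - xb) ^ 2 + \<tau> k * norm (y k - yb) ^ 2) \<longlonglongrightarrow> 0" using L by simp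
  from limit_norm[OF kkb this] show ?thesis using kkb by blast
qed

end



lemma box_closed:
  fixes l u :: "'n::finite \<Rightarrow> ereal"
  shows "closed (box_set l u)"
proof -
  have "box_set l u = (\<Inter>i. {x. l i \<le> ereal (x $ i)} \<inter> {x. ereal (x $ i) \<le> u i})"
    by (auto simp: box_set_def)
  moreover have "closed ({x::real^'n. l i \<le> ereal (x $ i)} \<inter> {x. ereal (x $ i) \<le> u i})" for i
    by (intro closed_Int closed_Collect_le continuous_intros)
  ultimately show ?thesis by auto
qed

lemma conv_aux:
  fixes a b s t :: real and lo hi :: ereal
  assumes "lo \<le> ereal a" "ereal a \<le> hi" "lo \<le> ereal b" "ereal b \<le> hi" "s \<ge> 0" "t \<ge> 0" "s + t = 1"
  shows "lo \<le> ereal (s * a + t * b) \<and> ereal (s * a + t * b) \<le> hi"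
proof -
  have "min a b \<le> s * a + t * b"
  proof -
    have "s * min a b \<le> s * a" "t * min a b \<le> t * b" using assms by (auto intro: mult_left_mono)
    then show ?thesis using assms(7) by (metis add_mono distrib_right mult_1)
  qed
  moreover have "s * a + t * b \<le> max a b"
  proof -
    have "s * a \<le> s * max a b" "t * b \<le> t * max a b" using assms by (auto intro: mult_left_mono)
    then show ?thesis using assms(7) by (metis add_mono distrib_right mult_1)
  qed
  moreover have "lo \<le> ereal (min a b)" using assms by (simp add: min_def)
  moreover have "ereal (max a b) \<le> hi" using assms by (simp add: max_def)
  ultimately show ?thesis by (meson ereal_less_eq(3) order_trans)
qed

lemma box_convex: "convex (box_set l u)"
  unfolding convex_def
proof (intro ballI allI impI)
  fix p q :: "real^'a" and s t :: real
  assume p: "p \<in> box_set l u" and q: "q \<in> box_set l u" and st: "0 \<le> s" "0 \<le> t" "s + t = 1"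
  show "s *\<^sub>R p + t *\<^sub>R q \<in> box_set l u"
    unfolding box_mem
  proof
    fix i
    show "l i \<le> ereal ((s *\<^sub>R p + t *\<^sub>R q) $ i) \<and> ereal ((s *\<^sub>R p + t *\<^sub>R q) $ i) \<le> u i"
      using conv_aux[of "l i" "p$i" "u i" "q$i" s t] p q st by (simp add: box_mem)
  qed
qed


theorem mainTheorem8:
  fixes A :: "real^'n^'m" and b :: "real^'m" and c :: "real^'n"
    and l u :: "'n \<Rightarrow> ereal"
    and \<sigma> \<tau> \<epsilon> :: "nat \<Rightarrow> real" and tau_inf :: real
    and x :: "nat \<Rightarrow> real^'n" and y :: "nat \<Rightarrow> real^'m"
  assumes l_ne: "\<And>i. l i \<noteq> \<infinity>" and u_ne: "\<And>i. u i \<noteq> -\<infinity>"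
    and P_sol: "\<exists>xs. primal_opt A b c (box_set l u) xs"
    and D_sol: "\<exists>ys. dual_opt A b c (box_set l u) ys"
    and full_rank: "rank A = CARD('m)"
    and sigma_pos: "\<sigma> 0 > 0" and sigma_mono: "incseq \<sigma>"
    and tau_pos: "\<And>k. \<tau> k > 0" and tau_mono: "decseq \<tau>"
    and tau_lim: "\<tau> \<longlonglongrightarrow> tau_inf" and tau_inf_pos: "tau_inf > 0"
    and eps_nonneg: "\<And>k. \<epsilon> k \<ge> 0" and eps_summable: "summable \<epsilon>"
    and stop_A: "\<And>k. norm (grad_psi A b c (box_set l u) (\<sigma> k) (\<tau> k) (x k) (y k) (y (Suc k)))
                    \<le> min (sqrt (\<tau> k)) 1 / \<sigma> k * \<epsilon> k"
    and x_update: "\<And>k. x (Suc k) = proj_K (box_set l u) (x k - \<sigma> k *\<^sub>R (c - transpose A *v y (Suc k)))"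
  shows "bounded (range (\<lambda>k. (y k, x k))) \<and>
         (\<exists>xs. primal_opt A b c (box_set l u) xs \<and> x \<longlonglongrightarrow> xs) \<and>
         (\<exists>ys. dual_opt A b c (box_set l u) ys \<and> y \<longlonglongrightarrow> ys)"
proof -
  let ?K = "box_set l u"
  obtain xs where xs: "primal_opt A b c ?K xs" using P_sol by blast
  have Kne: "?K \<noteq> {}" using xs by (auto simp: primal_opt_def)
  interpret S: snipal A b c ?K \<sigma> \<tau> \<epsilon> tau_inf x y
  proof
    show "closed ?K" by (rule box_closed)
    show "convex ?K" by (rule box_convex)
  qed (use Kne sigma_pos sigma_mono tau_pos tau_mono tau_lim tau_inf_pos eps_nonneg eps_summable stop_A x_update in auto)
  obtain ys where kk: "kkt A b c ?K xs ys" using kkt_exists[OF xs] by blast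
  have "bounded (range (\<lambda>k. (y k, x k)))"
    by (rule bounded_subset[OF bounded_Times[OF S.bounded_xy(2)[OF kk] S.bounded_xy(1)[OF kk]]]) auto
  moreover obtain xb yb where "kkt A b c ?K xb yb" "x \<longlonglongrightarrow> xb" "y \<longlonglongrightarrow> yb"
    using S.main_conv[OF kk] by blast
  ultimately show ?thesis using kkt_primal kkt_dual by blast
qed

end
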